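(* Let $k=\mathbb{F}_q$, $(Q,W)$ a QP with a cut $C$, $\alpha\in\mathbb{Z}_{\ge0}^{Q_0}$ and $\mu$ a slope function such that $(\alpha,\mu)$ is numb to $C$. Then $$|\varphi_\omega(\mathrm{Rep}^\mu_\alpha(Q))|=q^{\langle\alpha,\alpha\rangle_C}\,|\mathrm{Rep}^\mu_\alpha(J(Q,W;C))|,$$ and consequently $$\frac{|\varphi_\omega(\mathrm{Rep}^\mu_\alpha(Q))|_{\mathrm{vir}}}{|\mathrm{GL}_\alpha|_{\mathrm{vir}}}=q^{\frac12\langle\alpha,\alpha\rangle_{J_C}}\frac{|\mathrm{Rep}^\mu_\alpha(J(Q,W;C))|}{|\mathrm{GL}_\alpha|}.$$
   Context: $Q$ finite quiver, $W$ a potential, $\omega:\mathrm{Rep}_\alpha(Q)\to k$, $M\mapsto\operatorname{tr}W(M)$. A cut is $C\subset Q_1$ with $W$ homogeneous of degree $1$ when arrows of $C$ have degree $1$ and others degree $0$; $Q_C=(Q_0,Q_1\setminus C)$ and $J(Q,W;C)=\widehat{kQ_C}/\langle\partial_cW:c\in C\rangle$ ($\partial_c$ cyclic derivative). A slope function is $\mu=\sigma/\theta$ with $\sigma,\theta$ integral linear forms on $\mathbb{Z}^{Q_0}$ and $\theta(\gamma)>0$ for $\gamma\ne0$; $M$ is $\mu$-semistable if $\mu(\underline{\dim}L)\le\mu(\underline{\dim}M)$ for all nonzero subrepresentations $L$. $\mathrm{Rep}^\mu_\alpha(-)$ denotes the $\mu$-semistable locus. $(\alpha,\mu)$ is numb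 to $C$ if the vector bundle (forgetting arrows in $C$) $\pi:\mathrm{Rep}_\alpha(Q)\to\mathrm{Rep}_\alpha(Q_C)$ restricts to a bundle $\mathrm{Rep}^\mu_\alpha(Q)\to\mathrm{Rep}^\mu_\alpha(Q_C)$, i.e. $\mathrm{Rep}^\mu_\alpha(Q)=\pi^{-1}(\mathrm{Rep}^\mu_\alpha(Q_C))$. $|\varphi_\omega(X)|=|\omega^{-1}(0)|-|\omega^{-1}(1)|$ (numbers of $\mathbb{F}_q$-points), $|X|_{\mathrm{vir}}$-type quantities: $|\varphi_\omega(X)|_{\mathrm{vir}}=q^{-\dim X/2}|\varphi_\omega(X)|$, $|\mathrm{GL}_\alpha|_{\mathrm{vir}}=q^{-\dim\mathrm{GL}_\alpha/2}|\mathrm{GL}_\alpha(\mathbb{F}_q)|$, $\mathrm{GL}_\alpha=\prod_i\mathrm{GL}_{\alpha_i}$. $\langle\alpha,\beta\rangle_Q=\sum_i\alpha_i\beta_i-\sum_{a\in Q_1}\alpha_{ta}\beta_{ha}$, $\langle\alpha,\beta\rangle_C=\sum_{c\in C}\alpha_{tc}\beta_{hc}$, $\langle\alpha,\beta\rangle_{J_C}=\langle\alpha,\beta\rangle_Q+\langle\alpha,\beta\rangle_C+\langle\beta,\alpha\rangle_C$. *)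

theory Defs
  imports Complex_Main "HOL-Library.Function_Algebras"
begin

text \<open>Matrices over a field are functions nat => nat => 'k, with explicit sizes.\<close>

definition mmul :: "nat \<Rightarrow> (nat \<Rightarrow> nat \<Rightarrow> 'k::field) \<Rightarrow> (nat \<Rightarrow> nat \<Rightarrow> 'k) \<Rightarrow> nat \<Rightarrow> nat \<Rightarrow> 'k" where
  "mmul n A B = (\<lambda>i j. \<Sum>l<n. A i l * B l j)"

definition idm :: "nat \<Rightarrow> nat \<Rightarrow> nat \<Rightarrow> 'k::field" where
  "idm n = (\<lambda>i j. if i = j \<and> i < n then 1 else 0)"

definition mtr :: "nat \<Rightarrow> (nat \<Rightarrow> nat \<Rightarrow> 'k::field) \<Rightarrow> 'k" where
  "mtr n A = (\<Sum>i<n. A i i)"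

definition mvec :: "nat \<Rightarrow> (nat \<Rightarrow> nat \<Rightarrow> 'k::field) \<Rightarrow> (nat \<Rightarrow> 'k) \<Rightarrow> nat \<Rightarrow> 'k" where
  "mvec n A u = (\<lambda>i. \<Sum>j<n. A i j * u j)"

definition bounded_mat :: "nat \<Rightarrow> nat \<Rightarrow> (nat \<Rightarrow> nat \<Rightarrow> 'k::field) \<Rightarrow> bool" where
  "bounded_mat r c A \<longleftrightarrow> (\<forall>i j. (r \<le> i \<or> c \<le> j) \<longrightarrow> A i j = 0)"

text \<open>Quiver: arrows of type 'a (finite), vertices 'v (finite), tail src, head tgt.
  A representation of dimension vector al assigns to arrow a an al(tgt a) x al(src a) matrix.\<close>

definition reps :: "('v \<Rightarrow> nat) \<Rightarrow> ('a \<Rightarrow> 'v) \<Rightarrow> ('a \<Rightarrow> 'v) \<Rightarrow> 'a set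
    \<Rightarrow> ('a \<Rightarrow> nat \<Rightarrow> nat \<Rightarrow> 'k::field) set" where
  "reps al src tgt A = {M. \<forall>a i j. (a \<notin> A \<or> al (tgt a) \<le> i \<or> al (src a) \<le> j) \<longrightarrow> M a i j = 0}"

text \<open>Evaluation of a path [a1,...,an] (a1 traversed first) starting at vertex v:
  the matrix M(an)...M(a1); the empty path at v evaluates to the identity.\<close>

fun pev :: "('v \<Rightarrow> nat) \<Rightarrow> ('a \<Rightarrow> 'v) \<Rightarrow> ('a \<Rightarrow> 'v) \<Rightarrow> ('a \<Rightarrow> nat \<Rightarrow> nat \<Rightarrow> 'k::field)
    \<Rightarrow> 'v \<Rightarrow> 'a list \<Rightarrow> nat \<Rightarrow> nat \<Rightarrow> 'k" where
  "pev al src tgt M v [] = idm (al v)"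
| "pev al src tgt M v (a # p) = mmul (al (tgt a)) (pev al src tgt M (tgt a) p) (M a)"

definition is_path :: "('a \<Rightarrow> 'v) \<Rightarrow> ('a \<Rightarrow> 'v) \<Rightarrow> 'a list \<Rightarrow> bool" where
  "is_path src tgt p \<longleftrightarrow> (\<forall>i. Suc i < length p \<longrightarrow> tgt (p ! i) = src (p ! Suc i))"

definition is_cycle :: "('a \<Rightarrow> 'v) \<Rightarrow> ('a \<Rightarrow> 'v) \<Rightarrow> 'a list \<Rightarrow> bool" where
  "is_cycle src tgt p \<longleftrightarrow> p \<noteq> [] \<and> is_path src tgt p \<and> tgt (last p) = src (hd p)"

text \<open>A potential: finite linear combination of cycles, W p = coefficient of cycle p.\<close>

definition potential :: "('a \<Rightarrow> 'v) \<Rightarrow> ('a \<Rightarrow> 'v) \<Rightarrow> ('a list \<Rightarrow> 'k::field) \<Rightarrow> bool" where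
  "potential src tgt W \<longleftrightarrow> finite {p. W p \<noteq> 0} \<and> (\<forall>p. W p \<noteq> 0 \<longrightarrow> is_cycle src tgt p)"

text \<open>Cut: every cycle occurring in W contains exactly one arrow of C (W homogeneous of degree 1).\<close>

definition is_cut :: "'a set \<Rightarrow> ('a list \<Rightarrow> 'k::field) \<Rightarrow> bool" where
  "is_cut C W \<longleftrightarrow> (\<forall>p. W p \<noteq> 0 \<longrightarrow> length (filter (\<lambda>a. a \<in> C) p) = 1)"

definition omega :: "('v \<Rightarrow> nat) \<Rightarrow> ('a \<Rightarrow> 'v) \<Rightarrow> ('a \<Rightarrow> 'v) \<Rightarrow> ('a list \<Rightarrow> 'k::field)
    \<Rightarrow> ('a \<Rightarrow> nat \<Rightarrow> nat \<Rightarrow> 'k) \<Rightarrow> 'k" where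
  "omega al src tgt W M =
     (\<Sum>p\<in>{p. W p \<noteq> 0}. W p * mtr (al (src (hd p))) (pev al src tgt M (src (hd p)) p))"

text \<open>Evaluation at M of the cyclic derivative d_c W: for a cycle a1...an and each position i with
  a_i = c, the path a_(i+1)...a_n a_1...a_(i-1) from tgt c to src c.\<close>

definition cycder :: "('v \<Rightarrow> nat) \<Rightarrow> ('a \<Rightarrow> 'v) \<Rightarrow> ('a \<Rightarrow> 'v) \<Rightarrow> ('a list \<Rightarrow> 'k::field)
    \<Rightarrow> 'a \<Rightarrow> ('a \<Rightarrow> nat \<Rightarrow> nat \<Rightarrow> 'k) \<Rightarrow> nat \<Rightarrow> nat \<Rightarrow> 'k" where
  "cycder al src tgt W c M = (\<lambda>r s.
     \<Sum>p\<in>{p. W p \<noteq> 0}. W p *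
        (\<Sum>i\<in>{i. i < length p \<and> p ! i = c}.
            pev al src tgt M (tgt c) (drop (Suc i) p @ take i p) r s))"

definition vecs :: "nat \<Rightarrow> (nat \<Rightarrow> 'k::field) set" where
  "vecs n = {u. \<forall>j. n \<le> j \<longrightarrow> u j = 0}"

definition sc :: "'k::field \<Rightarrow> (nat \<Rightarrow> 'k) \<Rightarrow> (nat \<Rightarrow> 'k)" where
  "sc c u = (\<lambda>i. c * u i)"

definition subrep :: "('v \<Rightarrow> nat) \<Rightarrow> ('a \<Rightarrow> 'v) \<Rightarrow> ('a \<Rightarrow> 'v) \<Rightarrow> 'a set
    \<Rightarrow> ('a \<Rightarrow> nat \<Rightarrow> nat \<Rightarrow> 'k::field) \<Rightarrow> ('v \<Rightarrow> (nat \<Rightarrow> 'k) set) \<Rightarrow> bool" where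
  "subrep al src tgt A M U \<longleftrightarrow>
     (\<forall>i. U i \<subseteq> vecs (al i) \<and> module.subspace sc (U i)) \<and>
     (\<forall>a\<in>A. \<forall>u\<in>U (src a). mvec (al (src a)) (M a) u \<in> U (tgt a))"

definition dimv :: "('v \<Rightarrow> (nat \<Rightarrow> 'k::field) set) \<Rightarrow> 'v \<Rightarrow> nat" where
  "dimv U = (\<lambda>i. vector_space.dim (sc :: 'k \<Rightarrow> _) (U i))"

definition slope :: "('v::finite \<Rightarrow> int) \<Rightarrow> ('v \<Rightarrow> int) \<Rightarrow> ('v \<Rightarrow> nat) \<Rightarrow> real" where
  "slope \<sigma> \<theta> \<gamma> = real_of_int (\<Sum>i\<in>UNIV. \<sigma> i * int (\<gamma> i)) / real_of_int (\<Sum>i\<in>UNIV. \<theta> i * int (\<gamma> i))"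

definition slope_function :: "('v::finite \<Rightarrow> int) \<Rightarrow> bool" where
  "slope_function \<theta> \<longleftrightarrow> (\<forall>\<gamma>::'v \<Rightarrow> nat. \<gamma> \<noteq> (\<lambda>_. 0) \<longrightarrow> 0 < (\<Sum>i\<in>UNIV. \<theta> i * int (\<gamma> i)))"

definition semistable :: "('v::finite \<Rightarrow> nat) \<Rightarrow> ('a \<Rightarrow> 'v) \<Rightarrow> ('a \<Rightarrow> 'v) \<Rightarrow> 'a set
    \<Rightarrow> ('v \<Rightarrow> int) \<Rightarrow> ('v \<Rightarrow> int) \<Rightarrow> ('a \<Rightarrow> nat \<Rightarrow> nat \<Rightarrow> 'k::field) \<Rightarrow> bool" where
  "semistable al src tgt A \<sigma> \<theta> M \<longleftrightarrow>
     (\<forall>U. subrep al src tgt A M U \<and> (\<exists>i. U i \<noteq> {0}) \<longrightarrow>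
          slope \<sigma> \<theta> (dimv U) \<le> slope \<sigma> \<theta> al)"

definition sst_reps :: "('v::finite \<Rightarrow> nat) \<Rightarrow> ('a \<Rightarrow> 'v) \<Rightarrow> ('a \<Rightarrow> 'v) \<Rightarrow> 'a set
    \<Rightarrow> ('v \<Rightarrow> int) \<Rightarrow> ('v \<Rightarrow> int) \<Rightarrow> ('a \<Rightarrow> nat \<Rightarrow> nat \<Rightarrow> 'k::field) set" where
  "sst_reps al src tgt A \<sigma> \<theta> = {M \<in> reps al src tgt A. semistable al src tgt A \<sigma> \<theta> M}"

definition forget :: "'a set \<Rightarrow> ('a \<Rightarrow> nat \<Rightarrow> nat \<Rightarrow> 'k::field) \<Rightarrow> ('a \<Rightarrow> nat \<Rightarrow> nat \<Rightarrow> 'k)" where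
  "forget C M = (\<lambda>a. if a \<in> C then (\<lambda>i j. 0) else M a)"

text \<open>(al, mu) numb to C: Rep^mu_al(Q) = pi^-1(Rep^mu_al(Q_C)).\<close>

definition numb :: "('v::finite \<Rightarrow> nat) \<Rightarrow> ('a \<Rightarrow> 'v) \<Rightarrow> ('a \<Rightarrow> 'v) \<Rightarrow> 'a set
    \<Rightarrow> ('v \<Rightarrow> int) \<Rightarrow> ('v \<Rightarrow> int) \<Rightarrow> 'k::field itself \<Rightarrow> bool" where
  "numb al src tgt C \<sigma> \<theta> (_::'k itself) \<longleftrightarrow>
     (sst_reps al src tgt UNIV \<sigma> \<theta> :: ('a \<Rightarrow> nat \<Rightarrow> nat \<Rightarrow> 'k) set) =
       {M \<in> reps al src tgt UNIV. forget C M \<in> sst_reps al src tgt (- C) \<sigma> \<theta>}"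

text \<open>Rep^mu_al(J(Q,W;C)): semistable reps of Q_C satisfying d_c W = 0 for all c in C.\<close>

definition jac_sst_reps :: "('v::finite \<Rightarrow> nat) \<Rightarrow> ('a \<Rightarrow> 'v) \<Rightarrow> ('a \<Rightarrow> 'v) \<Rightarrow> ('a list \<Rightarrow> 'k::field)
    \<Rightarrow> 'a set \<Rightarrow> ('v \<Rightarrow> int) \<Rightarrow> ('v \<Rightarrow> int) \<Rightarrow> ('a \<Rightarrow> nat \<Rightarrow> nat \<Rightarrow> 'k) set" where
  "jac_sst_reps al src tgt W C \<sigma> \<theta> =
     {M \<in> sst_reps al src tgt (- C) \<sigma> \<theta>.
        \<forall>c\<in>C. \<forall>i j. i < al (src c) \<and> j < al (tgt c) \<longrightarrow> cycder al src tgt W c M i j = 0}"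

definition phi_count :: "('m \<Rightarrow> 'k::field) \<Rightarrow> 'm set \<Rightarrow> int" where
  "phi_count f X = int (card {M \<in> X. f M = 0}) - int (card {M \<in> X. f M = 1})"

definition euler_Q :: "('a::finite \<Rightarrow> 'v::finite) \<Rightarrow> ('a \<Rightarrow> 'v) \<Rightarrow> ('v \<Rightarrow> nat) \<Rightarrow> ('v \<Rightarrow> nat) \<Rightarrow> int" where
  "euler_Q src tgt al be = (\<Sum>i\<in>UNIV. int (al i * be i)) - (\<Sum>a\<in>UNIV. int (al (src a) * be (tgt a)))"

definition euler_C :: "('a \<Rightarrow> 'v) \<Rightarrow> ('a \<Rightarrow> 'v) \<Rightarrow> 'a set \<Rightarrow> ('v \<Rightarrow> nat) \<Rightarrow> ('v \<Rightarrow> nat) \<Rightarrow> int" where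
  "euler_C src tgt C al be = (\<Sum>c\<in>C. int (al (src c) * be (tgt c)))"

definition euler_JC :: "('a::finite \<Rightarrow> 'v::finite) \<Rightarrow> ('a \<Rightarrow> 'v) \<Rightarrow> 'a set \<Rightarrow> ('v \<Rightarrow> nat) \<Rightarrow> ('v \<Rightarrow> nat) \<Rightarrow> int" where
  "euler_JC src tgt C al be = euler_Q src tgt al be + euler_C src tgt C al be + euler_C src tgt C be al"

definition dim_rep :: "('a::finite \<Rightarrow> 'v) \<Rightarrow> ('a \<Rightarrow> 'v) \<Rightarrow> ('v \<Rightarrow> nat) \<Rightarrow> nat" where
  "dim_rep src tgt al = (\<Sum>a\<in>UNIV. al (src a) * al (tgt a))"

definition dim_gl :: "('v::finite \<Rightarrow> nat) \<Rightarrow> nat" where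
  "dim_gl al = (\<Sum>i\<in>UNIV. al i * al i)"

definition gl_set :: "('v \<Rightarrow> nat) \<Rightarrow> ('v \<Rightarrow> nat \<Rightarrow> nat \<Rightarrow> 'k::field) set" where
  "gl_set al = {g. \<forall>i. bounded_mat (al i) (al i) (g i) \<and>
      (\<exists>h. bounded_mat (al i) (al i) h \<and> mmul (al i) (g i) h = idm (al i) \<and> mmul (al i) h (g i) = idm (al i))}"

end

theory Submission imports Defs "HOL-Library.FuncSet" begin

lemma mmul_assoc: "mmul n (mmul m A B) Cm = mmul m A (mmul n B Cm)"
  unfolding mmul_def
  by (simp add: fun_eq_iff sum_distrib_left sum_distrib_right mult.assoc sum.swap[of _ "{..<n}"])

lemma mtr_mmul_comm: "mtr n (mmul m A B) = mtr m (mmul n B A)"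
  unfolding mtr_def mmul_def by (subst sum.swap) (simp add: mult.commute)

lemma mmul_idm_left: "(\<forall>i j. n \<le> i \<longrightarrow> A i j = 0) \<Longrightarrow> mmul n (idm n) A = A"
proof -
  assume h: "\<forall>i j. n \<le> i \<longrightarrow> A i j = 0"
  have "(\<Sum>l<n. (if i = l \<and> i < n then 1 else 0) * A l j) = A i j" for i j
    using h by (cases "i < n") (auto simp: if_distrib[of "\<lambda>x. x * _"] cong: if_cong)
  then show ?thesis unfolding mmul_def idm_def by (simp add: fun_eq_iff)
qed

lemma mmul_idm_right: "(\<forall>i j. n \<le> j \<longrightarrow> A i j = 0) \<Longrightarrow> mmul n A (idm n) = A"
proof -
  assume h: "\<forall>i j. n \<le> j \<longrightarrow> A i j = 0"
  have "(\<Sum>l<n. A i l * (if l = j \<and> l < n then 1 else 0)) = A i j" for i j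
    using h by (cases "j < n") (auto simp: if_distrib[of "\<lambda>x. _ * x"] cong: if_cong)
  then show ?thesis unfolding mmul_def idm_def by (simp add: fun_eq_iff)
qed

lemma pev_indep: "p \<noteq> [] \<Longrightarrow> pev al src tgt M v p = pev al src tgt M w p"
  by (cases p) auto

lemma pev_cong: "(\<forall>a\<in>set p. M a = M' a) \<Longrightarrow> pev al src tgt M v p = pev al src tgt M' v p"
  by (induction p arbitrary: v) auto

lemma pev_cols: "M \<in> reps al src tgt UNIV \<Longrightarrow> al (src a) \<le> j \<Longrightarrow> pev al src tgt M v (a # p) i j = 0"
  by (simp add: mmul_def reps_def)

lemma pev_append: "M \<in> reps al src tgt UNIV \<Longrightarrow> p \<noteq> [] \<Longrightarrow>
  pev al src tgt M v (p @ q) = mmul (al (tgt (last p))) (pev al src tgt M (tgt (last p)) q) (pev al src tgt M v p)"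
proof (induction p arbitrary: v)
  case Nil then show ?case by simp
next
  case (Cons a p)
  show ?case
  proof (cases "p = []")
    case True
    have "mmul (al (tgt a)) (idm (al (tgt a))) (M a) = M a"
      using Cons.prems(1) by (intro mmul_idm_left) (auto simp: reps_def)
    then show ?thesis using True by simp
  next
    case False
    then show ?thesis using Cons by (simp add: mmul_assoc)
  qed
qed
lemma cyc_trace:
  assumes M: "M \<in> reps al src tgt UNIV" and cyc: "is_cycle src tgt p" and i0: "i0 < length p"
  shows "mtr (al (src (hd p))) (pev al src tgt M (src (hd p)) p)
    = mtr (al (src (p!i0))) (mmul (al (tgt (p!i0))) (pev al src tgt M (tgt (p!i0)) (drop (Suc i0) p @ take i0 p)) (M (p!i0)))"
proof -
  define x where "x = take i0 p"
  define y where "y = drop (Suc i0) p"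
  define c where "c = p ! i0"
  define v where "v = src (hd p)"
  have p: "p = x @ c # y" unfolding x_def y_def c_def using i0 by (simp add: id_take_nth_drop)
  have ne: "p \<noteq> []" and path: "is_path src tgt p" and cl: "tgt (last p) = src (hd p)"
    using cyc unfolding is_cycle_def by auto
  show ?thesis
  proof (cases "i0 = 0")
    case True
    then have "x = []" unfolding x_def by simp
    then have pc: "p = c # y" using p by simp
    have f: "hd p = c" "p ! i0 = c" "drop (Suc i0) p = y" "take i0 p = []"
      using pc True c_def y_def x_def ne by (auto simp: hd_conv_nth)
    have "pev al src tgt M (src c) p = mmul (al (tgt c)) (pev al src tgt M (tgt c) y) (M c)"
      by (subst pc) simp
    then show ?thesis unfolding f by simp
  next
    case False
    then have xne: "x \<noteq> []" unfolding x_def using i0 by auto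
    have lx: "last x = p ! (i0 - 1)" unfolding x_def using False i0
      using xne unfolding x_def by (simp add: last_conv_nth min_def)
    have "tgt (p ! (i0 - 1)) = src (p ! Suc (i0 - 1))"
      using path i0 False unfolding is_path_def by auto
    then have tlx: "tgt (last x) = src c" using lx False unfolding c_def by simp
    define Px where "Px = pev al src tgt M v x"
    define Py where "Py = pev al src tgt M (tgt c) y"
    have "pev al src tgt M v p = mmul (al (src c)) (pev al src tgt M (src c) (c # y)) Px"
      unfolding Px_def using pev_append[OF M xne, of v "c # y"] p tlx by simp
    also have "\<dots> = mmul (al (src c)) (mmul (al (tgt c)) Py (M c)) Px"
      unfolding Py_def by simp
    finally have e1: "pev al src tgt M v p = mmul (al (src c)) (mmul (al (tgt c)) Py (M c)) Px" .
    have key: "mmul (al v) Px Py = pev al src tgt M (tgt c) (y @ x)"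
    proof (cases "y = []")
      case False
      have ly: "last y = last p" unfolding y_def using False y_def by simp
      show ?thesis using pev_append[OF M False, of "tgt c" x] ly cl
        unfolding Px_def Py_def v_def using pev_indep[OF xne] by metis
    next
      case True
      then have "Suc i0 = length p" using i0 unfolding y_def by simp
      then have "c = last p" unfolding c_def using ne by (simp add: last_conv_nth flip: \<open>Suc i0 = length p\<close>)
      then have tc: "tgt c = v" using cl v_def by simp
      obtain a x' where xa: "x = a # x'" using xne by (cases x) auto
      have "hd x = hd p" unfolding x_def using False ne by simp
      then have "src a = v" using xa v_def by simp
      then have "\<forall>i j. al v \<le> j \<longrightarrow> Px i j = 0" unfolding Px_def xa
        using pev_cols[OF M] by blast
      then have "mmul (al v) Px (idm (al v)) = Px" by (rule mmul_idm_right)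
      then show ?thesis using True tc unfolding Py_def Px_def using pev_indep[OF xne] by simp
    qed
    have "mtr (al v) (pev al src tgt M v p) = mtr (al (src c)) (mmul (al v) Px (mmul (al (tgt c)) Py (M c)))"
      unfolding e1 by (rule mtr_mmul_comm)
    also have "\<dots> = mtr (al (src c)) (mmul (al (tgt c)) (mmul (al v) Px Py) (M c))"
      by (simp add: mmul_assoc)
    finally show ?thesis unfolding key unfolding v_def c_def x_def y_def .
  qed
qed
lemma swap4:
  "(\<Sum>r\<in>R. \<Sum>s\<in>S. (\<Sum>p\<in>A. w p * (\<Sum>i\<in>B p. f p i r s)) * g r s)
   = (\<Sum>p\<in>A. w p * (\<Sum>i\<in>B p. \<Sum>r\<in>R. \<Sum>s\<in>S. f p i r s * (g r s :: 'k::field)))"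
proof -
  have "(\<Sum>r\<in>R. \<Sum>s\<in>S. (\<Sum>p\<in>A. w p * (\<Sum>i\<in>B p. f p i r s)) * g r s)
      = (\<Sum>r\<in>R. \<Sum>s\<in>S. \<Sum>p\<in>A. \<Sum>i\<in>B p. w p * (f p i r s * g r s))"
    by (simp add: sum_distrib_left sum_distrib_right mult.assoc)
  also have "\<dots> = (\<Sum>r\<in>R. \<Sum>p\<in>A. \<Sum>s\<in>S. \<Sum>i\<in>B p. w p * (f p i r s * g r s))"
    by (rule sum.cong[OF refl], rule sum.swap)
  also have "\<dots> = (\<Sum>p\<in>A. \<Sum>r\<in>R. \<Sum>s\<in>S. \<Sum>i\<in>B p. w p * (f p i r s * g r s))"
    by (rule sum.swap)
  also have "\<dots> = (\<Sum>p\<in>A. \<Sum>i\<in>B p. \<Sum>r\<in>R. \<Sum>s\<in>S. w p * (f p i r s * g r s))"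
  proof (rule sum.cong[OF refl])
    fix p
    have "(\<Sum>r\<in>R. \<Sum>s\<in>S. \<Sum>i\<in>B p. w p * (f p i r s * g r s))
        = (\<Sum>r\<in>R. \<Sum>i\<in>B p. \<Sum>s\<in>S. w p * (f p i r s * g r s))"
      by (rule sum.cong[OF refl], rule sum.swap)
    also have "\<dots> = (\<Sum>i\<in>B p. \<Sum>r\<in>R. \<Sum>s\<in>S. w p * (f p i r s * g r s))"
      by (rule sum.swap)
    finally show "(\<Sum>r\<in>R. \<Sum>s\<in>S. \<Sum>i\<in>B p. w p * (f p i r s * g r s))
        = (\<Sum>i\<in>B p. \<Sum>r\<in>R. \<Sum>s\<in>S. w p * (f p i r s * g r s))" .
  qed
  also have "\<dots> = (\<Sum>p\<in>A. w p * (\<Sum>i\<in>B p. \<Sum>r\<in>R. \<Sum>s\<in>S. f p i r s * g r s))"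
    by (simp add: sum_distrib_left)
  finally show ?thesis .
qed

lemma omega_lin:
  fixes W :: "'a list \<Rightarrow> 'k::field"
  assumes pot: "potential src tgt W" and cut: "is_cut C W" and M: "M \<in> reps al src tgt UNIV"
    and fC: "finite C"
  shows "omega al src tgt W M = (\<Sum>c\<in>C. \<Sum>r<al (src c). \<Sum>s<al (tgt c).
            cycder al src tgt W c (forget C M) r s * M c s r)"
proof -
  define P where "P = {p. W p \<noteq> 0}"
  define M0 where "M0 = forget C M"
  define G where "G p c i = (\<Sum>r<al (src c). \<Sum>s<al (tgt c).
        pev al src tgt M0 (tgt c) (drop (Suc i) p @ take i p) r s * M c s r)" for p c i
  have "(\<Sum>c\<in>C. \<Sum>r<al (src c). \<Sum>s<al (tgt c). cycder al src tgt W c M0 r s * M c s r)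
      = (\<Sum>c\<in>C. \<Sum>p\<in>P. W p * (\<Sum>i\<in>{i. i < length p \<and> p ! i = c}. G p c i))"
    unfolding cycder_def P_def G_def by (rule sum.cong[OF refl], rule swap4)
  also have "\<dots> = (\<Sum>p\<in>P. W p * (\<Sum>c\<in>C. \<Sum>i\<in>{i. i < length p \<and> p ! i = c}. G p c i))"
    by (subst sum.swap) (simp add: sum_distrib_left)
  also have "\<dots> = (\<Sum>p\<in>P. W p * mtr (al (src (hd p))) (pev al src tgt M (src (hd p)) p))"
  proof (rule sum.cong[OF refl])
    fix p assume "p \<in> P"
    then have Wp: "W p \<noteq> 0" unfolding P_def by simp
    then have cyc: "is_cycle src tgt p" using pot unfolding potential_def by auto
    define S where "S = {i. i < length p \<and> p ! i \<in> C}"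
    have "card S = 1" using cut Wp unfolding is_cut_def S_def by (simp add: length_filter_conv_card)
    then obtain i0 where S: "S = {i0}" by (rule card_1_singletonE)
    then have i0: "i0 < length p" "p ! i0 \<in> C" unfolding S_def by auto
    have fS: "finite S" unfolding S_def by simp
    have "(\<Sum>c\<in>C. \<Sum>i\<in>{i. i < length p \<and> p ! i = c}. G p c i)
        = (\<Sum>c\<in>C. \<Sum>i\<in>{i. i \<in> S \<and> p ! i = c}. G p (p ! i) i)"
      by (rule sum.cong[OF refl], rule sum.cong) (auto simp: S_def)
    also have "\<dots> = (\<Sum>i\<in>S. G p (p ! i) i)"
      by (rule sum.group[OF fS fC]) (auto simp: S_def)
    also have "\<dots> = G p (p ! i0) i0" using S by simp
    also have "\<dots> = mtr (al (src (p ! i0))) (mmul (al (tgt (p ! i0)))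
          (pev al src tgt M0 (tgt (p ! i0)) (drop (Suc i0) p @ take i0 p)) (M (p ! i0)))"
      unfolding G_def mtr_def mmul_def by simp
    also have "\<dots> = mtr (al (src (p ! i0))) (mmul (al (tgt (p ! i0)))
          (pev al src tgt M (tgt (p ! i0)) (drop (Suc i0) p @ take i0 p)) (M (p ! i0)))"
    proof -
      have "\<forall>a\<in>set (drop (Suc i0) p @ take i0 p). M0 a = M a"
      proof
        fix a assume a: "a \<in> set (drop (Suc i0) p @ take i0 p)"
        have "a \<notin> C"
        proof
          assume aC: "a \<in> C"
          from a consider "a \<in> set (drop (Suc i0) p)" | "a \<in> set (take i0 p)" by auto
          then show False
          proof cases
            case 1
            then obtain k where "k < length (drop (Suc i0) p)" "drop (Suc i0) p ! k = a"
              by (auto simp: in_set_conv_nth)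
            then have "Suc i0 + k \<in> S" using aC unfolding S_def by auto
            then show False using S by simp
          next
            case 2
            then obtain k where "k < length (take i0 p)" "take i0 p ! k = a"
              by (auto simp: in_set_conv_nth)
            then have "k \<in> S" "k < i0" using aC unfolding S_def by auto
            then show False using S by simp
          qed
        qed
        then show "M0 a = M a" unfolding M0_def forget_def by simp
      qed
      then show ?thesis using pev_cong by metis
    qed
    also have "\<dots> = mtr (al (src (hd p))) (pev al src tgt M (src (hd p)) p)"
      using cyc_trace[OF M cyc i0(1)] by simp
    finally show "W p * (\<Sum>c\<in>C. \<Sum>i\<in>{i. i < length p \<and> p ! i = c}. G p c i)
        = W p * mtr (al (src (hd p))) (pev al src tgt M (src (hd p)) p)" by simp
  qed
  finally show ?thesis unfolding omega_def P_def M0_def by simp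
qed

definition ext_map :: "('v \<Rightarrow> nat) \<Rightarrow> ('a \<Rightarrow> 'v) \<Rightarrow> ('a \<Rightarrow> 'v) \<Rightarrow> 'a set
   \<Rightarrow> ('a \<times> nat \<times> nat \<Rightarrow> 'k::field) \<Rightarrow> 'a \<Rightarrow> nat \<Rightarrow> nat \<Rightarrow> 'k" where
  "ext_map al src tgt A f = (\<lambda>a i j. if a \<in> A \<and> i < al (tgt a) \<and> j < al (src a) then f (a, i, j) else 0)"

definition dset :: "('v \<Rightarrow> nat) \<Rightarrow> ('a \<Rightarrow> 'v) \<Rightarrow> ('a \<Rightarrow> 'v) \<Rightarrow> 'a set \<Rightarrow> ('a \<times> nat \<times> nat) set" where
  "dset al src tgt A = {(a, i, j). a \<in> A \<and> i < al (tgt a) \<and> j < al (src a)}"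

lemma dset_Sigma: "dset al src tgt A = (SIGMA a:A. {..<al (tgt a)} \<times> {..<al (src a)})"
  unfolding dset_def by auto

lemma finite_dset: "finite A \<Longrightarrow> finite (dset al src tgt A)"
  unfolding dset_Sigma by auto

lemma card_dset: "finite A \<Longrightarrow> card (dset al src tgt A) = (\<Sum>a\<in>A. al (tgt a) * al (src a))"
  unfolding dset_Sigma by (simp add: card_cartesian_product)

lemma reps_img: "reps al src tgt A = ext_map al src tgt A ` (PiE (dset al src tgt A) (\<lambda>_. UNIV))"
proof
  show "reps al src tgt A \<subseteq> ext_map al src tgt A ` (PiE (dset al src tgt A) (\<lambda>_. UNIV))"
  proof
    fix M assume M: "M \<in> reps al src tgt A"
    have eq: "M = ext_map al src tgt A (restrict (\<lambda>(a, i, j). M a i j) (dset al src tgt A))"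
    proof (intro ext)
      fix a i j
      show "M a i j = ext_map al src tgt A (restrict (\<lambda>(a, i, j). M a i j) (dset al src tgt A)) a i j"
      proof (cases "a \<in> A \<and> i < al (tgt a) \<and> j < al (src a)")
        case True then show ?thesis unfolding ext_map_def dset_def by simp
      next
        case False
        then have "M a i j = 0" using M unfolding reps_def by auto
        then show ?thesis using False unfolding ext_map_def by auto
      qed
    qed
    have "restrict (\<lambda>(a, i, j). M a i j) (dset al src tgt A) \<in> PiE (dset al src tgt A) (\<lambda>_. UNIV)"
      by simp
    with eq show "M \<in> ext_map al src tgt A ` (PiE (dset al src tgt A) (\<lambda>_. UNIV))"
      by (rule image_eqI)
  qed
next
  show "ext_map al src tgt A ` (PiE (dset al src tgt A) (\<lambda>_. UNIV)) \<subseteq> reps al src tgt A"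
    unfolding ext_map_def reps_def by auto
qed

lemma inj_ext_map: "inj_on (ext_map al src tgt A) (PiE (dset al src tgt A) (\<lambda>_. UNIV))"
proof (rule inj_onI)
  fix f g assume f: "f \<in> PiE (dset al src tgt A) (\<lambda>_. UNIV)" and g: "g \<in> PiE (dset al src tgt A) (\<lambda>_. UNIV)"
    and e: "ext_map al src tgt A f = ext_map al src tgt A g"
  show "f = g"
  proof (rule PiE_ext[OF f g])
    fix x assume "x \<in> dset al src tgt A"
    then obtain a i j where x: "x = (a, i, j)" "a \<in> A" "i < al (tgt a)" "j < al (src a)"
      unfolding dset_def by auto
    have "ext_map al src tgt A f a i j = ext_map al src tgt A g a i j" using e by simp
    then show "f x = g x" using x unfolding ext_map_def by simp
  qed
qed

lemma card_reps:
  assumes "finite A"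
  shows "card (reps al src tgt A :: ('a \<Rightarrow> nat \<Rightarrow> nat \<Rightarrow> 'k::{field,finite}) set)
     = card (UNIV :: 'k set) ^ (\<Sum>a\<in>A. al (tgt a) * al (src a))"
    and "finite (reps al src tgt A :: ('a \<Rightarrow> nat \<Rightarrow> nat \<Rightarrow> 'k::{field,finite}) set)"
proof -
  have "card (reps al src tgt A :: ('a \<Rightarrow> nat \<Rightarrow> nat \<Rightarrow> 'k) set)
     = card (PiE (dset al src tgt A) (\<lambda>_. UNIV :: 'k set))"
    unfolding reps_img by (rule card_image[OF inj_ext_map])
  also have "\<dots> = card (UNIV :: 'k set) ^ card (dset al src tgt A)"
    using finite_dset[OF assms, of al src tgt] by (simp add: card_PiE prod_constant)
  finally show "card (reps al src tgt A :: ('a \<Rightarrow> nat \<Rightarrow> nat \<Rightarrow> 'k::{field,finite}) set)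
     = card (UNIV :: 'k set) ^ (\<Sum>a\<in>A. al (tgt a) * al (src a))"
    using card_dset[OF assms, of al src tgt] by simp
  show "finite (reps al src tgt A :: ('a \<Rightarrow> nat \<Rightarrow> nat \<Rightarrow> 'k::{field,finite}) set)"
    unfolding reps_img by (intro finite_imageI finite_PiE finite_dset[OF assms] finite_UNIV)
qed

lemma fiber_img:
  assumes M0: "M0 \<in> reps al src tgt (- C)"
  shows "{M \<in> reps al src tgt UNIV. forget C M = M0}
      = (\<lambda>N a. if a \<in> C then N a else M0 a) ` reps al src tgt C"
    and "inj_on (\<lambda>N a. if a \<in> C then N a else M0 a) (reps al src tgt C)"
proof -
  show "{M \<in> reps al src tgt UNIV. forget C M = M0}
      = (\<lambda>N a. if a \<in> C then N a else M0 a) ` reps al src tgt C"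
  proof
    show "{M \<in> reps al src tgt UNIV. forget C M = M0} \<subseteq> (\<lambda>N a. if a \<in> C then N a else M0 a) ` reps al src tgt C"
    proof
      fix M assume M: "M \<in> {M \<in> reps al src tgt UNIV. forget C M = M0}"
      define N where "N = (\<lambda>a. if a \<in> C then M a else (\<lambda>i j. 0))"
      have "M = (\<lambda>a. if a \<in> C then N a else M0 a)"
      proof
        fix a
        have "forget C M a = M0 a" using M by simp
        then show "M a = (if a \<in> C then N a else M0 a)" unfolding forget_def N_def by (cases "a \<in> C") auto
      qed
      moreover have "N \<in> reps al src tgt C" using M unfolding reps_def N_def by auto
      ultimately show "M \<in> (\<lambda>N a. if a \<in> C then N a else M0 a) ` reps al src tgt C" by blast
    qed
  next
    show "(\<lambda>N a. if a \<in> C then N a else M0 a) ` reps al src tgt C \<subseteq> {M \<in> reps al src tgt UNIV. forget C M = M0}"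
    proof
      fix M assume "M \<in> (\<lambda>N a. if a \<in> C then N a else M0 a) ` reps al src tgt C"
      then obtain N where N: "N \<in> reps al src tgt C" and M: "M = (\<lambda>a. if a \<in> C then N a else M0 a)" by blast
      have "M \<in> reps al src tgt UNIV"
        unfolding reps_def
      proof (intro CollectI allI impI)
        fix a i j assume h: "a \<notin> UNIV \<or> al (tgt a) \<le> i \<or> al (src a) \<le> j"
        show "M a i j = 0"
        proof (cases "a \<in> C")
          case True then show ?thesis using N h unfolding M reps_def by auto
        next
          case False then show ?thesis using M0 h unfolding M reps_def by auto
        qed
      qed
      moreover have "forget C M = M0"
      proof
        fix a show "forget C M a = M0 a"
        proof (cases "a \<in> C")
          case True
          have "M0 a i j = 0" for i j using M0 True unfolding reps_def by auto
          then show ?thesis using True unfolding forget_def by (auto simp: fun_eq_iff)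
        next
          case False then show ?thesis unfolding forget_def M by simp
        qed
      qed
      ultimately show "M \<in> {M \<in> reps al src tgt UNIV. forget C M = M0}" by simp
    qed
  qed
  show "inj_on (\<lambda>N a. if a \<in> C then N a else M0 a) (reps al src tgt C)"
  proof (rule inj_onI)
    fix N N' assume N: "N \<in> reps al src tgt C" and N': "N' \<in> reps al src tgt C"
      and e: "(\<lambda>a. if a \<in> C then N a else M0 a) = (\<lambda>a. if a \<in> C then N' a else M0 a)"
    show "N = N'"
    proof (rule ext)
      fix a show "N a = N' a"
      proof (cases "a \<in> C")
        case True then show ?thesis using fun_cong[OF e, of a] by simp
      next
        case False
        have "N a i j = 0" "N' a i j = 0" for i j using N N' False unfolding reps_def by auto
        then show ?thesis by (simp add: fun_eq_iff)
      qed
    qed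
  qed
qed
lemma delta3:
  fixes cy :: "'a \<Rightarrow> nat \<Rightarrow> nat \<Rightarrow> 'k::field"
  assumes "c \<in> C" "r < al (src c)" "s < al (tgt c)" "finite C"
  shows "(\<Sum>c'\<in>C. \<Sum>r'<al (src c'). \<Sum>s'<al (tgt c'). cy c' r' s' * (if c' = c \<and> s' = s \<and> r' = r then u else 0))
     = cy c r s * u"
proof -
  have "(\<Sum>s'<al (tgt c'). cy c' r' s' * (if c' = c \<and> s' = s \<and> r' = r then u else 0))
      = (if c' = c \<and> r' = r then cy c r s * u else 0)" for c' r'
    using assms(3) by (cases "c' = c \<and> r' = r") (auto simp: if_distrib[of "\<lambda>x. _ * x"] cong: if_cong)
  then have "(\<Sum>c'\<in>C. \<Sum>r'<al (src c'). \<Sum>s'<al (tgt c'). cy c' r' s' * (if c' = c \<and> s' = s \<and> r' = r then u else 0))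
      = (\<Sum>c'\<in>C. \<Sum>r'<al (src c'). (if c' = c \<and> r' = r then cy c r s * u else 0))" by simp
  also have "\<dots> = (\<Sum>c'\<in>C. if c' = c then cy c r s * u else 0)"
    using assms(2) by (intro sum.cong refl) (auto simp: cong: if_cong)
  also have "\<dots> = cy c r s * u" using assms(1,4) by simp
  finally show ?thesis .
qed
lemma fiber_sum:
  fixes W :: "'a::finite list \<Rightarrow> 'k::{field,finite}" and C :: "'a set"
  assumes pot: "potential src tgt W" and cut: "is_cut C W"
    and M0: "M0 \<in> reps al src tgt (- C)"
  shows "(\<Sum>M\<in>{M \<in> reps al src tgt UNIV. forget C M = M0}.
            (if omega al src tgt W M = 0 then 1 else 0) - (if omega al src tgt W M = 1 then 1 else (0::int)))
     = (if (\<forall>c\<in>C. \<forall>i j. i < al (src c) \<and> j < al (tgt c) \<longrightarrow> cycder al src tgt W c M0 i j = 0)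
        then int (card (reps al src tgt C :: ('a \<Rightarrow> nat \<Rightarrow> nat \<Rightarrow> 'k) set)) else 0)"
proof -
  have fC: "finite C" by simp
  define F where "F = {M \<in> reps al src tgt UNIV. forget C M = (M0 :: 'a \<Rightarrow> nat \<Rightarrow> nat \<Rightarrow> 'k)}"
  have fF: "finite F" unfolding F_def
    using card_reps(2)[of "UNIV :: 'a set" al src tgt, where 'k='k] by simp
  have cF: "card F = card (reps al src tgt C :: ('a \<Rightarrow> nat \<Rightarrow> nat \<Rightarrow> 'k) set)"
    unfolding F_def fiber_img(1)[OF M0] by (rule card_image[OF fiber_img(2)[OF M0]])
  define Lin where "Lin M = (\<Sum>c\<in>C. \<Sum>r<al (src c). \<Sum>s<al (tgt c).
            cycder al src tgt W c M0 r s * M c s r)" for M :: "'a \<Rightarrow> nat \<Rightarrow> nat \<Rightarrow> 'k"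
  have om: "omega al src tgt W M = Lin M" if "M \<in> F" for M
    using omega_lin[OF pot cut _ fC, of M al] that unfolding F_def Lin_def by simp
  define h where "h M = (if omega al src tgt W M = 0 then 1 else 0) - (if omega al src tgt W M = 1 then 1 else (0::int))"
    for M
  show ?thesis
  proof (cases "\<forall>c\<in>C. \<forall>i j. i < al (src c) \<and> j < al (tgt c) \<longrightarrow> cycder al src tgt W c M0 i j = 0")
    case True
    have "h M = 1" if "M \<in> F" for M
    proof -
      have "Lin M = 0" unfolding Lin_def using True by (intro sum.neutral ballI) auto
      then show ?thesis using om[OF that] unfolding h_def by simp
    qed
    then have "sum h F = int (card F)" by simp
    also have "\<dots> = (if (\<forall>c\<in>C. \<forall>i j. i < al (src c) \<and> j < al (tgt c) \<longrightarrow> cycder al src tgt W c M0 i j = 0)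
        then int (card (reps al src tgt C :: ('a \<Rightarrow> nat \<Rightarrow> nat \<Rightarrow> 'k) set)) else 0)"
      by (subst if_P[OF True]) (simp only: cF)
    finally show ?thesis unfolding h_def F_def .
  next
    case False
    then obtain c r s where c: "c \<in> C" "r < al (src c)" "s < al (tgt c)"
      and d: "cycder al src tgt W c M0 r s \<noteq> 0" by blast
    define d where "d = cycder al src tgt W c M0 r s"
    define sh where "sh u M = (\<lambda>a i j. if a = c \<and> i = s \<and> j = r then M a i j + u else M a i j)"
      for u :: 'k and M :: "'a \<Rightarrow> nat \<Rightarrow> nat \<Rightarrow> 'k"
    have shF: "sh u M \<in> F" if "M \<in> F" for u M
    proof -
      have "sh u M \<in> reps al src tgt UNIV"
        using that c unfolding F_def reps_def sh_def by auto
      moreover have "forget C (sh u M) = forget C M"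
        using c unfolding forget_def sh_def by (auto simp: fun_eq_iff)
      ultimately show ?thesis using that unfolding F_def by simp
    qed
    have shsh: "sh (- u) (sh u M) = M" "sh u (sh (- u) M) = M" for u M unfolding sh_def by (auto simp: fun_eq_iff)
    have shv: "sh u M c' s' r' = M c' s' r' + (if c' = c \<and> s' = s \<and> r' = r then u else 0)" for u M c' s' r'
      unfolding sh_def by simp
    have Lsh: "Lin (sh u M) = Lin M + d * u" for u M
    proof -
      have "Lin (sh u M) = (\<Sum>c'\<in>C. \<Sum>r'<al (src c'). \<Sum>s'<al (tgt c').
          cycder al src tgt W c' M0 r' s' * M c' s' r' +
          cycder al src tgt W c' M0 r' s' * (if c' = c \<and> s' = s \<and> r' = r then u else 0))"
        unfolding Lin_def shv distrib_left by (rule refl)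
      also have "\<dots> = Lin M + (\<Sum>c'\<in>C. \<Sum>r'<al (src c'). \<Sum>s'<al (tgt c').
          cycder al src tgt W c' M0 r' s' * (if c' = c \<and> s' = s \<and> r' = r then u else 0))"
        unfolding Lin_def sum.distrib by (rule refl)
      also have "\<dots> = Lin M + d * u"
        unfolding delta3[of c C r al src s tgt "\<lambda>c r s. cycder al src tgt W c M0 r s" u, OF c fC] d_def
        by (rule refl)
      finally show ?thesis .
    qed
    define t where "t = 1 / d"
    have dt: "d * t = 1" unfolding t_def using d unfolding d_def by simp
    have omsh: "omega al src tgt W (sh t M) = omega al src tgt W M + 1" if "M \<in> F" for M
    proof -
      have "omega al src tgt W (sh t M) = Lin (sh t M)" by (rule om[OF shF[OF that]])
      also have "\<dots> = Lin M + 1" unfolding Lsh dt by (rule refl)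
      finally show ?thesis using om[OF that] by simp
    qed
    have bij: "bij_betw (sh t) F F"
      by (rule bij_betwI[where g = "sh (- t)"]) (auto simp: shF shsh)
    have "(\<Sum>M\<in>F. if omega al src tgt W M = 1 then 1 else (0::int))
        = (\<Sum>M\<in>F. if omega al src tgt W (sh t M) = 1 then 1 else 0)"
      by (rule sum.reindex_bij_betw[OF bij, symmetric])
    also have "\<dots> = (\<Sum>M\<in>F. if omega al src tgt W M = 0 then 1 else 0)"
      by (rule sum.cong[OF refl]) (simp add: omsh)
    finally have "sum h F = 0" unfolding h_def by (simp add: sum_subtractf)
    also have "(0::int) = (if (\<forall>c\<in>C. \<forall>i j. i < al (src c) \<and> j < al (tgt c) \<longrightarrow> cycder al src tgt W c M0 i j = 0)
        then int (card (reps al src tgt C :: ('a \<Rightarrow> nat \<Rightarrow> nat \<Rightarrow> 'k) set)) else 0)"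
      by (subst if_not_P[OF False]) (rule refl)
    finally show ?thesis unfolding h_def F_def .
  qed
qed
lemma int_card_filter: "finite X \<Longrightarrow> int (card {x \<in> X. P x}) = (\<Sum>x\<in>X. if P x then 1 else (0::int))"
proof -
  assume "finite X"
  have "{x \<in> X. P x} = X \<inter> {x. P x}" by auto
  then show ?thesis using \<open>finite X\<close> by (simp add: sum.If_cases)
qed

theorem lemmaL:
  fixes src tgt :: "'a::finite \<Rightarrow> 'v::finite"
    and W :: "'a list \<Rightarrow> 'k::{field,finite}"
    and C :: "'a set"
    and al :: "'v \<Rightarrow> nat"
    and \<sigma> \<theta> :: "'v \<Rightarrow> int"
  assumes "potential src tgt W"
    and "is_cut C W"
    and "slope_function \<theta>"
    and "numb al src tgt C \<sigma> \<theta> TYPE('k)"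
  defines "q \<equiv> card (UNIV :: 'k set)"
    and "X \<equiv> (sst_reps al src tgt UNIV \<sigma> \<theta> :: ('a \<Rightarrow> nat \<Rightarrow> nat \<Rightarrow> 'k) set)"
    and "J \<equiv> jac_sst_reps al src tgt W C \<sigma> \<theta>"
  shows "phi_count (omega al src tgt W) X = int q ^ nat (euler_C src tgt C al al) * int (card J)
    \<and> (real q powr (- real (dim_rep src tgt al) / 2) * real_of_int (phi_count (omega al src tgt W) X))
           / (real q powr (- real (dim_gl al) / 2) * real (card (gl_set al :: ('v \<Rightarrow> nat \<Rightarrow> nat \<Rightarrow> 'k) set)))
         = real q powr (real_of_int (euler_JC src tgt C al al) / 2)
           * (real (card J) / real (card (gl_set al :: ('v \<Rightarrow> nat \<Rightarrow> nat \<Rightarrow> 'k) set)))"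
proof -
  have fC: "finite C" by simp
  define S where "S = (sst_reps al src tgt (- C) \<sigma> \<theta> :: ('a \<Rightarrow> nat \<Rightarrow> nat \<Rightarrow> 'k) set)"
  have XS: "X = {M \<in> reps al src tgt UNIV. forget C M \<in> S}"
    using assms(4) unfolding numb_def X_def S_def by simp
  have Sreps: "S \<subseteq> reps al src tgt (- C)" unfolding S_def sst_reps_def by auto
  have fS: "finite S" using card_reps(2)[of "- C" al src tgt, where 'k='k] Sreps finite_subset by auto
  have fX: "finite X" unfolding XS using card_reps(2)[of "UNIV :: 'a set" al src tgt, where 'k='k] by simp
  define h where "h M = (if omega al src tgt W M = 0 then 1 else 0) - (if omega al src tgt W M = 1 then 1 else (0::int))"
    for M
  define Jc where "Jc M0 = (\<forall>c\<in>C. \<forall>i j. i < al (src c) \<and> j < al (tgt c) \<longrightarrow> cycder al src tgt W c M0 i j = 0)"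
    for M0 :: "'a \<Rightarrow> nat \<Rightarrow> nat \<Rightarrow> 'k"
  define K where "K = int (card (reps al src tgt C :: ('a \<Rightarrow> nat \<Rightarrow> nat \<Rightarrow> 'k) set))"
  have "phi_count (omega al src tgt W) X = sum h X"
    unfolding phi_count_def h_def int_card_filter[OF fX] by (simp add: sum_subtractf)
  also have "\<dots> = (\<Sum>M0\<in>S. \<Sum>M\<in>{M \<in> X. forget C M = M0}. h M)"
    by (rule sum.group[symmetric, OF fX fS]) (auto simp: XS)
  also have "\<dots> = (\<Sum>M0\<in>S. if Jc M0 then K else 0)"
  proof (rule sum.cong[OF refl])
    fix M0 assume M0: "M0 \<in> S"
    have seteq: "{M \<in> X. forget C M = M0} = {M \<in> reps al src tgt UNIV. forget C M = M0}"
      using M0 unfolding XS by auto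
    have M0r: "M0 \<in> reps al src tgt (- C)" using M0 Sreps by auto
    show "(\<Sum>M\<in>{M \<in> X. forget C M = M0}. h M) = (if Jc M0 then K else 0)"
      unfolding seteq h_def Jc_def K_def by (rule fiber_sum[OF assms(1,2) M0r])
  qed
  also have "\<dots> = K * int (card {M0 \<in> S. Jc M0})"
    using fS by (simp add: sum.inter_filter[symmetric])
  also have "{M0 \<in> S. Jc M0} = J" unfolding J_def jac_sst_reps_def S_def Jc_def by simp
  finally have phi0: "phi_count (omega al src tgt W) X = K * int (card J)" .
  define N where "N = (\<Sum>c\<in>C. al (src c) * al (tgt c))"
  have eC: "euler_C src tgt C al al = int N" unfolding euler_C_def N_def by simp
  have "K = int q ^ N" unfolding K_def q_def N_def using card_reps(1)[OF fC, of al src tgt, where 'k='k]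
    by (simp add: mult.commute)
  then have phi: "phi_count (omega al src tgt W) X = int q ^ nat (euler_C src tgt C al al) * int (card J)"
    using phi0 eC by simp
  have qpos: "0 < real q" unfolding q_def using card_gt_0_iff[of "UNIV::'k set"] by simp
  have eJ: "real_of_int (euler_JC src tgt C al al) = real (dim_gl al) - real (dim_rep src tgt al) + 2 * real N"
    unfolding euler_JC_def euler_Q_def eC dim_gl_def dim_rep_def
    by (simp add: of_nat_sum[symmetric])
  define G where "G = real (card (gl_set al :: ('v \<Rightarrow> nat \<Rightarrow> nat \<Rightarrow> 'k) set))"
  define a where "a = real q powr (- real (dim_rep src tgt al) / 2)"
  define b where "b = real q powr (- real (dim_gl al) / 2)"
  define e where "e = real q powr (real_of_int (euler_JC src tgt C al al) / 2)"
  have bpos: "b > 0" unfolding b_def using qpos by simp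
  have eb: "e * b = a * real q ^ N"
  proof -
    have "e * b = real q powr (real_of_int (euler_JC src tgt C al al) / 2 + - real (dim_gl al) / 2)"
      unfolding e_def b_def by (rule powr_add[symmetric])
    also have "\<dots> = real q powr (- real (dim_rep src tgt al) / 2 + real N)"
    proof -
      have "real_of_int (euler_JC src tgt C al al) / 2 + - real (dim_gl al) / 2 = - real (dim_rep src tgt al) / 2 + real N"
        unfolding eJ by (simp add: field_simps)
      then show ?thesis by simp
    qed
    also have "\<dots> = a * real q ^ N" unfolding a_def by (simp only: powr_add powr_realpow[OF qpos])
    finally show ?thesis .
  qed
  have "a * real_of_int (phi_count (omega al src tgt W) X) / (b * G) = e * (real (card J) / G)"
  proof -
    have "a * real_of_int (phi_count (omega al src tgt W) X) = (a * real q ^ N) * real (card J)"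
      unfolding phi0 \<open>K = int q ^ N\<close> by simp
    also have "\<dots> = e * b * real (card J)" using eb by simp
    finally have "a * real_of_int (phi_count (omega al src tgt W) X) / (b * G) = e * b * real (card J) / (b * G)" by simp
    also have "\<dots> = e * (real (card J) / G)" using bpos by (cases "G = 0") (simp_all add: field_simps)
    finally show ?thesis .
  qed
  then show ?thesis using phi unfolding a_def b_def e_def G_def by simp
qed
end
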